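(* For every $x\in W_1$ one has $J\mathfrak{e}^L_xJ^{-1}=-q\,\mathfrak{i}^R_x$. Consequently, for $v\in W_{k+1}$ and $\underline i\in\Lambda_k$, $$(\mathfrak{i}^R_xv)_{\underline i}=\sum_{j\notin\underline i}(-q)^{L(j,\underline i\cup j)-1}\,\overline{x_j}\,v_{\underline i\cup j},$$ where $L(j,\underline i')$ denotes the position of $j$ in the string $\underline i'$.
   Context: $0<q<1$, $\ell\ge2$. $\Lambda_k$ = strictly increasing $k$-tuples in $\{1,\dots,\ell\}$, $W_k=\mathbb{C}^{\Lambda_k}$ ($W_0=\mathbb{C}$), inner product $\langle v,w\rangle=\sum_{\underline i}\overline{v_{\underline i}}w_{\underline i}$. For $\underline i'$ disjoint from $\underline i$, $\underline i\cup\underline i'$ is the ordered union; $\underline i\setminus j$ removes $j$; $|\underline i|=\sum_r i_r$; $\underline i^c$ is the complementary increasing tuple. Product $\wedge_q:W_h\otimes W_k\to W_{h+k}$ (zero if $h+k>\ell$): $(v\wedge_qw)_{\underline i}=\sum_{p}(-q^{-1})^{\|p\|}v_{i_{p(1)},\dots,i_{p(h)}}w_{i_{p(h+1)},\dots,i_{p(h+k)}}$, sum over permutations $p$ of $\{1,\dots,h+k\}$ increasing on $\{1..h\}$ and on $\{h+1..h+k\}$, $\|p\|$ = number of inversions (e.g. for $x\in W_1$, $w\in W_k$: $(x\wedge_q w)_{\underline i}=\sum_r(-q)^{1-r}x_{i_r}w_{\underline i\setminus i_r}$). For $x\in W_1$: $\mathfrak{e}^L_xw=x\wedge_qw$ and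 $\mathfrak{e}^R_xw=(-q)^kw\wedge_qx$ for $w\in W_k$; $\mathfrak{i}^R_x$ is the adjoint of $\mathfrak{e}^R_x$. $J:W_k\to W_{\ell-k}$ is the antilinear map $(Jw)_{\underline i}=(-q^{-1})^{|\underline i|}q^{\frac14\ell(\ell+1)}\overline{w_{\underline i^c}}$, and $J,\mathfrak{e}^L_x,\mathfrak{i}^R_x$ are regarded as operators on $\bigoplus_{k=0}^\ell W_k$. *)

theory Defs
  imports "HOL-Analysis.Analysis" "HOL-Combinatorics.Permutations"
begin

text \<open>Strictly increasing tuples in {1..l} are represented as strictly sorted lists.
  The direct sum of the W_k is represented by functions on nat lists that vanish
  outside the index set Lam l; W_k corresponds to those supported on lists of length k.\<close>

definition Lam :: "nat \<Rightarrow> nat list set" where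
  "Lam l = {i. sorted_wrt (<) i \<and> set i \<subseteq> {1..l}}"

definition Lamk :: "nat \<Rightarrow> nat \<Rightarrow> nat list set" where
  "Lamk l k = {i \<in> Lam l. length i = k}"

definition Vsp :: "nat \<Rightarrow> (nat list \<Rightarrow> complex) set" where
  "Vsp l = {v. \<forall>i. i \<notin> Lam l \<longrightarrow> v i = 0}"

definition Wk :: "nat \<Rightarrow> nat \<Rightarrow> (nat list \<Rightarrow> complex) set" where
  "Wk l k = {v \<in> Vsp l. \<forall>i. v i \<noteq> 0 \<longrightarrow> length i = k}"

definition ip :: "nat \<Rightarrow> (nat list \<Rightarrow> complex) \<Rightarrow> (nat list \<Rightarrow> complex) \<Rightarrow> complex" where
  "ip l v w = (\<Sum>i\<in>Lam l. cnj (v i) * w i)"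

definition shuffles :: "nat \<Rightarrow> nat \<Rightarrow> (nat \<Rightarrow> nat) set" where
  "shuffles h k = {p. p permutes {1..h+k} \<and> strict_mono_on {1..h} p \<and> strict_mono_on {h+1..h+k} p}"

definition inversions :: "nat \<Rightarrow> (nat \<Rightarrow> nat) \<Rightarrow> nat" where
  "inversions n p = card {(a,b). a \<in> {1..n} \<and> b \<in> {1..n} \<and> a < b \<and> p b < p a}"

text \<open>(v \<and>_q w)_i for v in W_h, w in W_k, i of length h+k.\<close>
definition wedge :: "real \<Rightarrow> nat \<Rightarrow> nat \<Rightarrow> (nat list \<Rightarrow> complex) \<Rightarrow> (nat list \<Rightarrow> complex)
    \<Rightarrow> nat list \<Rightarrow> complex" where
  "wedge q h k v w i = (\<Sum>p\<in>shuffles h k.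
     (- 1 / complex_of_real q) ^ inversions (h+k) p
     * v (map (\<lambda>r. i ! (p r - 1)) [1..<h+1])
     * w (map (\<lambda>r. i ! (p r - 1)) [h+1..<h+k+1]))"

definition eL :: "nat \<Rightarrow> real \<Rightarrow> (nat list \<Rightarrow> complex) \<Rightarrow> (nat list \<Rightarrow> complex) \<Rightarrow> nat list \<Rightarrow> complex" where
  "eL l q x w = (\<lambda>i. if i \<in> Lam l \<and> 1 \<le> length i then wedge q 1 (length i - 1) x w i else 0)"

definition eR :: "nat \<Rightarrow> real \<Rightarrow> (nat list \<Rightarrow> complex) \<Rightarrow> (nat list \<Rightarrow> complex) \<Rightarrow> nat list \<Rightarrow> complex" where
  "eR l q x w = (\<lambda>i. if i \<in> Lam l \<and> 1 \<le> length i
      then (- complex_of_real q) ^ (length i - 1) * wedge q (length i - 1) 1 w x i else 0)"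

definition compl :: "nat \<Rightarrow> nat list \<Rightarrow> nat list" where
  "compl l i = sorted_list_of_set ({1..l} - set i)"

definition Jop :: "nat \<Rightarrow> real \<Rightarrow> (nat list \<Rightarrow> complex) \<Rightarrow> nat list \<Rightarrow> complex" where
  "Jop l q w = (\<lambda>i. if i \<in> Lam l then
      (- 1 / complex_of_real q) ^ sum_list i * complex_of_real (q powr (real (l * (l + 1)) / 4))
      * cnj (w (compl l i)) else 0)"

text \<open>Position (1-based) of j in the string xs.\<close>
definition pos :: "nat \<Rightarrow> nat list \<Rightarrow> nat" where
  "pos j xs = length (takeWhile (\<lambda>a. a \<noteq> j) xs) + 1"

end

theory Submission
  imports Defs
begin


definition del :: "nat \<Rightarrow> nat list \<Rightarrow> nat list" where
  "del r m = take r m @ drop (Suc r) m"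

lemma length_del: "r < length m \<Longrightarrow> length (del r m) = length m - 1"
  by (simp add: del_def)

lemma nth_del: "r < length m \<Longrightarrow> a < length m - 1 \<Longrightarrow>
   del r m ! a = (if a < r then m ! a else m ! Suc a)"
  by (auto simp: del_def nth_append min_def)

lemma set_del: "distinct m \<Longrightarrow> r < length m \<Longrightarrow> set (del r m) = set m - {m ! r}"
proof -
  assume d: "distinct m" and r: "r < length m"
  have e: "m = take r m @ m ! r # drop (Suc r) m" using r by (simp add: id_take_nth_drop)
  have "distinct (take r m @ m ! r # drop (Suc r) m)" using d e by simp
  then have "m ! r \<notin> set (take r m) \<and> m ! r \<notin> set (drop (Suc r) m)" by auto
  moreover have "set m = set (take r m) \<union> {m!r} \<union> set (drop (Suc r) m)"
    by (subst e, auto)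
  ultimately show ?thesis by (auto simp: del_def)
qed

lemma sorted_del: "sorted_wrt (<) m \<Longrightarrow> sorted_wrt (<) (del r m)"
proof -
  assume s: "sorted_wrt (<) m"
  have a: "sorted_wrt (<) (take r m @ drop r m)" using s by simp
  have sub: "set (drop (Suc r) m) \<subseteq> set (drop r m)" by (simp add: set_drop_subset_set_drop)
  have "sorted_wrt (<) (take r m @ drop (Suc r) m)"
    using a sub s unfolding sorted_wrt_append by (auto simp: sorted_wrt_drop sorted_wrt_take)
  then show ?thesis by (simp add: del_def)
qed

lemma Lam_iff: "m \<in> Lam l \<longleftrightarrow> sorted_wrt (<) m \<and> set m \<subseteq> {1..l}"
  by (simp add: Lam_def)

lemma finite_Lam: "finite (Lam l)"
proof (rule inj_on_finite[where f = set and B = "Pow {1..l}"])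
  show "inj_on set (Lam l)" by (auto simp: inj_on_def Lam_def intro: strict_sorted_equal)
  show "set ` Lam l \<subseteq> Pow {1..l}" by (auto simp: Lam_def)
qed auto

lemma del_Lam: "m \<in> Lam l \<Longrightarrow> r < length m \<Longrightarrow> del r m \<in> Lam l"
  using sorted_del[of m r] set_del[of m r] by (auto simp: Lam_def strict_sorted_iff)

lemma compl_props: "sorted_wrt (<) (compl l i) \<and> set (compl l i) = {1..l} - set i"
  by (simp add: compl_def strict_sorted_iff)

lemma compl_Lam: "compl l i \<in> Lam l"
  using compl_props[of l i] by (auto simp: Lam_def)

lemma compl_compl: "i \<in> Lam l \<Longrightarrow> compl l (compl l i) = i"
  using compl_props[of l i] compl_props[of l "compl l i"]
  by (intro strict_sorted_equal) (auto simp: Lam_def)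

lemma insort_props: "sorted_wrt (<) i \<Longrightarrow> j \<notin> set i \<Longrightarrow>
   sorted_wrt (<) (insort j i) \<and> set (insort j i) = insert j (set i) \<and> length (insort j i) = Suc (length i)"
  by (auto simp: strict_sorted_iff sorted_insort distinct_insort set_insort_key)

lemma del_eq_iff: "sorted_wrt (<) m \<Longrightarrow> sorted_wrt (<) i \<Longrightarrow> r < length m \<Longrightarrow>
   del r m = i \<longleftrightarrow> (m ! r \<notin> set i \<and> m = insort (m ! r) i)"
proof
  assume s: "sorted_wrt (<) m" and si: "sorted_wrt (<) i" and r: "r < length m" and e: "del r m = i"
  have d: "distinct m" using s by (simp add: strict_sorted_iff)
  have sd: "set i = set m - {m!r}" using set_del[OF d r] e by simp
  then have "m ! r \<notin> set i" by auto
  moreover have "m = insort (m ! r) i"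
    using insort_props[OF si \<open>m ! r \<notin> set i\<close>] sd r s
    by (intro strict_sorted_equal) (auto simp: nth_mem)
  ultimately show "m ! r \<notin> set i \<and> m = insort (m ! r) i" by simp
next
  assume s: "sorted_wrt (<) m" and si: "sorted_wrt (<) i" and r: "r < length m"
    and h: "m ! r \<notin> set i \<and> m = insort (m ! r) i"
  have d: "distinct m" using s by (simp add: strict_sorted_iff)
  have "set m = insert (m!r) (set i)" using insort_props[OF si, of "m!r"] h by metis
  then have "set (del r m) = set i" using set_del[OF d r] h by auto
  then show "del r m = i" using sorted_del[OF s] si by (intro strict_sorted_equal) auto
qed

lemma idx_card: "sorted_wrt (<) (m::nat list) \<Longrightarrow> r < length m \<Longrightarrow> card {a \<in> set m. a < m ! r} = r"
proof -
  assume s: "sorted_wrt (<) m" and r: "r < length m"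
  have d: "distinct m" using s by (simp add: strict_sorted_iff)
  have "{a \<in> set m. a < m ! r} = set (take r m)"
  proof safe
    fix a assume "a \<in> set m" "a < m ! r"
    then obtain t where t: "t < length m" "a = m ! t" by (auto simp: in_set_conv_nth)
    have "t < r"
    proof (rule ccontr)
      assume "\<not> t < r"
      then have "r = t \<or> r < t" by auto
      then show False using t \<open>a < m ! r\<close> s r unfolding sorted_wrt_iff_nth_less
        by (metis less_asym less_irrefl)
    qed
    then show "a \<in> set (take r m)" using t r by (auto simp: in_set_conv_nth)
  next
    fix a assume "a \<in> set (take r m)"
    then show "a \<in> set m" by (meson in_set_takeD)
  next
    fix a assume "a \<in> set (take r m)"
    then obtain t where t: "t < r" "a = m ! t" using r by (auto simp: in_set_conv_nth)
    then show "a < m ! r" using s r by (auto simp: sorted_wrt_iff_nth_less)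
  qed
  moreover have "card (set (take r m)) = r" using d r by (simp add: distinct_card)
  ultimately show ?thesis by simp
qed

lemma pos_nth: "distinct m \<Longrightarrow> j \<in> set m \<Longrightarrow> pos j m - 1 < length m \<and> m ! (pos j m - 1) = j"
proof -
  assume "distinct m" "j \<in> set m"
  have "length (takeWhile (\<lambda>a. a \<noteq> j) m) < length m"
    using \<open>j \<in> set m\<close> by (induct m) auto
  moreover then have "m ! length (takeWhile (\<lambda>a. a \<noteq> j) m) = j"
    using nth_length_takeWhile[of "\<lambda>a. a \<noteq> j" m] by auto
  ultimately show ?thesis by (simp add: pos_def)
qed




lemma smono_unique:
  fixes f g :: "nat \<Rightarrow> nat"
  assumes A: "finite A" and f: "strict_mono_on A f" and g: "strict_mono_on A g"
    and im: "f ` A = g ` A" and a: "a \<in> A"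
  shows "f a = g a"
proof -
  define xs where "xs = sorted_list_of_set A"
  have xs: "sorted_wrt (<) xs" "set xs = A" using A by (auto simp: xs_def)
  have "sorted_wrt (<) (map f xs)" unfolding sorted_wrt_map
    by (rule sorted_wrt_mono_rel[OF _ xs(1)]) (use f xs(2) in \<open>auto simp: strict_mono_on_def\<close>)
  moreover have "sorted_wrt (<) (map g xs)" unfolding sorted_wrt_map
    by (rule sorted_wrt_mono_rel[OF _ xs(1)]) (use g xs(2) in \<open>auto simp: strict_mono_on_def\<close>)
  ultimately have "map f xs = map g xs" using im xs(2) by (intro strict_sorted_equal) auto
  then show ?thesis using a xs(2) by (metis map_eq_conv)
qed

lemma perm_img: "p permutes S \<Longrightarrow> b \<in> S \<Longrightarrow> p ` (S - {b}) = S - {p b}"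
  by (metis image_set_diff image_empty image_insert permutes_image permutes_inj)

lemma perm_of: assumes "finite S" "inj_on p S" "p ` S \<subseteq> S" "\<And>a. a \<notin> S \<Longrightarrow> p a = a"
  shows "p permutes S"
  using assms by (intro bij_imp_permutes) (auto simp: bij_betw_def endo_inj_surj)

definition sh1 :: "nat \<Rightarrow> nat \<Rightarrow> nat" where
  "sh1 r a = (if a = 1 then r else if 2 \<le> a \<and> a \<le> r then a - 1 else a)"

definition sh2 :: "nat \<Rightarrow> nat \<Rightarrow> nat \<Rightarrow> nat" where
  "sh2 k r a = (if a = k+1 then r else if r \<le> a \<and> a \<le> k then a + 1 else a)"

lemma sh1_in: assumes "r \<in> {1..k+1}" shows "sh1 r \<in> shuffles 1 k"
proof -
  have "sh1 r permutes {1..k+1}"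
    by (rule perm_of) (use assms in \<open>auto simp: sh1_def inj_on_def split: if_splits\<close>)
  moreover have "strict_mono_on {1+1..1+k} (sh1 r)"
    by (auto simp: strict_mono_on_def sh1_def)
  ultimately show ?thesis by (auto simp: shuffles_def strict_mono_on_def)
qed

lemma sh2_in: assumes "r \<in> {1..k+1}" shows "sh2 k r \<in> shuffles k 1"
proof -
  have "sh2 k r permutes {1..k+1}"
    by (rule perm_of) (use assms in \<open>auto simp: sh2_def inj_on_def split: if_splits\<close>)
  moreover have "strict_mono_on {1..k} (sh2 k r)"
    by (auto simp: strict_mono_on_def sh2_def)
  ultimately show ?thesis by (auto simp: shuffles_def strict_mono_on_def)
qed

lemma shuffles1: "shuffles 1 k = sh1 ` {1..k+1}"
proof
  show "sh1 ` {1..k+1} \<subseteq> shuffles 1 k" using sh1_in by auto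
next
  show "shuffles 1 k \<subseteq> sh1 ` {1..k+1}"
  proof
    fix p assume p: "p \<in> shuffles 1 k"
    then have pp: "p permutes {1..k+1}" and pm: "strict_mono_on {2..k+1} p"
      by (auto simp: shuffles_def numeral_2_eq_2)
    define r where "r = p 1"
    have r: "r \<in> {1..k+1}" using permutes_in_image[OF pp, of "1"] by (simp add: r_def)
    have sp: "sh1 r permutes {1..k+1}" and sm: "strict_mono_on {2..k+1} (sh1 r)"
      using sh1_in[OF r] by (auto simp: shuffles_def numeral_2_eq_2)
    have A: "{2..k+1} = {1..k+1} - {1::nat}" by auto
    have im: "p ` {2..k+1} = sh1 r ` {2..k+1}"
    proof -
      have "p ` ({1..k+1} - {1}) = {1..k+1} - {r}" using perm_img[OF pp, of 1] by (simp add: r_def)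
      moreover have "sh1 r ` ({1..k+1} - {1}) = {1..k+1} - {r}" using perm_img[OF sp, of 1] by (simp add: sh1_def)
      ultimately show ?thesis by (simp only: A)
    qed
    have "p = sh1 r"
    proof
      fix a
      show "p a = sh1 r a"
      proof (cases "a \<in> {2..k+1}")
        case True then show ?thesis using smono_unique[OF _ pm sm im] by auto
      next
        case False
        then have "a = 1 \<or> a \<notin> {1..k+1}" by auto
        then show ?thesis
        proof
          assume "a = 1" then show ?thesis by (simp add: r_def sh1_def)
        next
          assume "a \<notin> {1..k+1}"
          then show ?thesis using permutes_not_in[OF pp] permutes_not_in[OF sp] by metis
        qed
      qed
    qed
    then show "p \<in> sh1 ` {1..k+1}" using r by auto
  qed
qed

lemma shuffles2: "shuffles k 1 = sh2 k ` {1..k+1}"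
proof
  show "sh2 k ` {1..k+1} \<subseteq> shuffles k 1" using sh2_in by auto
next
  show "shuffles k 1 \<subseteq> sh2 k ` {1..k+1}"
  proof
    fix p assume p: "p \<in> shuffles k 1"
    then have pp: "p permutes {1..k+1}" and pm: "strict_mono_on {1..k} p"
      by (auto simp: shuffles_def)
    define r where "r = p (k+1)"
    have r: "r \<in> {1..k+1}" using permutes_in_image[OF pp, of "k+1"] by (simp add: r_def)
    have sp: "sh2 k r permutes {1..k+1}" and sm: "strict_mono_on {1..k} (sh2 k r)"
      using sh2_in[OF r] by (auto simp: shuffles_def)
    have A: "{1..k} = {1..k+1} - {k+1::nat}" by auto
    have im: "p ` {1..k} = sh2 k r ` {1..k}"
    proof -
      have "p ` ({1..k+1} - {k+1}) = {1..k+1} - {r}" using perm_img[OF pp, of "k+1"] by (simp add: r_def)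
      moreover have "sh2 k r ` ({1..k+1} - {k+1}) = {1..k+1} - {r}" using perm_img[OF sp, of "k+1"] by (simp add: sh2_def)
      ultimately show ?thesis by (simp only: A)
    qed
    have "p = sh2 k r"
    proof
      fix a
      show "p a = sh2 k r a"
      proof (cases "a \<in> {1..k}")
        case True then show ?thesis using smono_unique[OF _ pm sm im] by auto
      next
        case False
        then have "a = k+1 \<or> a \<notin> {1..k+1}" by auto
        then show ?thesis
        proof
          assume "a = k+1" then show ?thesis by (simp add: r_def sh2_def)
        next
          assume "a \<notin> {1..k+1}"
          then show ?thesis using permutes_not_in[OF pp] permutes_not_in[OF sp] by metis
        qed
      qed
    qed
    then show "p \<in> sh2 k ` {1..k+1}" using r by auto
  qed
qed

lemma inv1: assumes "r \<in> {1..k+1}" shows "inversions (1+k) (sh1 r) = r - 1"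
proof -
  have "{(a,b). a \<in> {1..1+k} \<and> b \<in> {1..1+k} \<and> a < b \<and> sh1 r b < sh1 r a} = {1} \<times> {2..r}"
    using assms by (auto simp: sh1_def split: if_splits)
  then show ?thesis by (simp add: inversions_def)
qed

lemma inv2: assumes "r \<in> {1..k+1}" shows "inversions (k+1) (sh2 k r) = k + 1 - r"
proof -
  have "{(a,b). a \<in> {1..k+1} \<and> b \<in> {1..k+1} \<and> a < b \<and> sh2 k r b < sh2 k r a} = {r..k} \<times> {k+1}"
    using assms by (auto simp: sh2_def split: if_splits)
  then show ?thesis by (simp add: inversions_def)
qed




lemma map_sh1: assumes "length i = Suc k" "r < Suc k"
  shows "map (\<lambda>a. i ! (sh1 (Suc r) a - 1)) [Suc (Suc 0)..<Suc (Suc k)] = del r i"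
  by (rule nth_equalityI) (use assms in \<open>auto simp: length_del nth_del sh1_def simp del: upt_Suc\<close>)

lemma map_sh2: assumes "length i = Suc k" "r < Suc k"
  shows "map (\<lambda>a. i ! (sh2 k (Suc r) a - 1)) [Suc 0..<Suc k] = del r i"
  by (rule nth_equalityI) (use assms in \<open>auto simp: length_del nth_del sh2_def simp del: upt_Suc\<close>)

lemma wedge1: assumes "length i = Suc k"
  shows "wedge q 1 k x w i = (\<Sum>r<Suc k. (- 1 / complex_of_real q) ^ r * x [i ! r] * w (del r i))"
proof -
  have inj: "inj_on sh1 {1..k+1}"
    by (rule inj_onI) (metis sh1_def)
  have "wedge q 1 k x w i = (\<Sum>r\<in>{1..k+1}. (- 1 / complex_of_real q) ^ inversions (1+k) (sh1 r)
     * x (map (\<lambda>a. i ! (sh1 r a - 1)) [1..<1+1])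
     * w (map (\<lambda>a. i ! (sh1 r a - 1)) [1+1..<1+k+1]))"
    unfolding wedge_def shuffles1 sum.reindex[OF inj] comp_def by (rule refl)
  also have "\<dots> = (\<Sum>r<Suc k. (- 1 / complex_of_real q) ^ inversions (1+k) (sh1 (Suc r))
     * x (map (\<lambda>a. i ! (sh1 (Suc r) a - 1)) [1..<1+1])
     * w (map (\<lambda>a. i ! (sh1 (Suc r) a - 1)) [1+1..<1+k+1]))"
    by (simp del: upt_Suc add: sum.atLeast1_atMost_eq)
  also have "\<dots> = (\<Sum>r<Suc k. (- 1 / complex_of_real q) ^ r * x [i ! r] * w (del r i))"
  proof (rule sum.cong[OF refl])
    fix r assume r: "r \<in> {..<Suc k}"
    have "inversions (1+k) (sh1 (Suc r)) = r" using inv1[of "Suc r" k] r by auto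
    moreover have "map (\<lambda>a. i ! (sh1 (Suc r) a - 1)) [1..<1+1] = [i ! r]" by (simp add: sh1_def)
    moreover have "map (\<lambda>a. i ! (sh1 (Suc r) a - 1)) [1+1..<1+k+1] = del r i"
      using map_sh1[OF assms, of r] r by simp
    ultimately show "(- 1 / complex_of_real q) ^ inversions (1+k) (sh1 (Suc r))
     * x (map (\<lambda>a. i ! (sh1 (Suc r) a - 1)) [1..<1+1])
     * w (map (\<lambda>a. i ! (sh1 (Suc r) a - 1)) [1+1..<1+k+1])
     = (- 1 / complex_of_real q) ^ r * x [i ! r] * w (del r i)" by simp
  qed
  finally show ?thesis .
qed

lemma wedge2: assumes "length i = Suc k"
  shows "wedge q k 1 w x i = (\<Sum>r<Suc k. (- 1 / complex_of_real q) ^ (k - r) * w (del r i) * x [i ! r])"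
proof -
  have inj: "inj_on (sh2 k) {1..k+1}"
    by (rule inj_onI) (metis sh2_def)
  have "wedge q k 1 w x i = (\<Sum>r\<in>{1..k+1}. (- 1 / complex_of_real q) ^ inversions (k+1) (sh2 k r)
     * w (map (\<lambda>a. i ! (sh2 k r a - 1)) [1..<k+1])
     * x (map (\<lambda>a. i ! (sh2 k r a - 1)) [k+1..<k+1+1]))"
    unfolding wedge_def shuffles2 sum.reindex[OF inj] comp_def by (rule refl)
  also have "\<dots> = (\<Sum>r<Suc k. (- 1 / complex_of_real q) ^ inversions (k+1) (sh2 k (Suc r))
     * w (map (\<lambda>a. i ! (sh2 k (Suc r) a - 1)) [1..<k+1])
     * x (map (\<lambda>a. i ! (sh2 k (Suc r) a - 1)) [k+1..<k+1+1]))"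
    by (simp del: upt_Suc add: sum.atLeast1_atMost_eq)
  also have "\<dots> = (\<Sum>r<Suc k. (- 1 / complex_of_real q) ^ (k - r) * w (del r i) * x [i ! r])"
  proof (rule sum.cong[OF refl])
    fix r assume r: "r \<in> {..<Suc k}"
    have "inversions (k+1) (sh2 k (Suc r)) = k - r" using inv2[of "Suc r" k] r by auto
    moreover have "map (\<lambda>a. i ! (sh2 k (Suc r) a - 1)) [k+1..<k+1+1] = [i ! r]" by (simp add: sh2_def)
    moreover have "map (\<lambda>a. i ! (sh2 k (Suc r) a - 1)) [1..<k+1] = del r i"
      using map_sh2[OF assms, of r] r by simp
    ultimately show "(- 1 / complex_of_real q) ^ inversions (k+1) (sh2 k (Suc r))
     * w (map (\<lambda>a. i ! (sh2 k (Suc r) a - 1)) [1..<k+1])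
     * x (map (\<lambda>a. i ! (sh2 k (Suc r) a - 1)) [k+1..<k+1+1])
     = (- 1 / complex_of_real q) ^ (k - r) * w (del r i) * x [i ! r]" by simp
  qed
  finally show ?thesis .
qed

lemma eL_eq: "m \<in> Lam l \<Longrightarrow>
  eL l q x w m = (\<Sum>r<length m. (- 1 / complex_of_real q) ^ r * x [m ! r] * w (del r m))"
proof (cases "length m")
  case 0 then show ?thesis by (simp add: eL_def)
next
  case (Suc k)
  assume "m \<in> Lam l"
  then show ?thesis using wedge1[OF Suc, of q x w] Suc by (simp add: eL_def)
qed

lemma eR_eq: assumes q: "q \<noteq> 0" shows "m \<in> Lam l \<Longrightarrow>
  eR l q x w m = (\<Sum>r<length m. (- complex_of_real q) ^ r * w (del r m) * x [m ! r])"
proof (cases "length m")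
  case 0 then show ?thesis by (simp add: eR_def)
next
  case (Suc k)
  assume "m \<in> Lam l"
  then have "eR l q x w m = (- complex_of_real q) ^ k * 
     (\<Sum>r<Suc k. (- 1 / complex_of_real q) ^ (k - r) * w (del r m) * x [m ! r])"
    using wedge2[OF Suc, of q w x] Suc by (simp add: eR_def)
  also have "\<dots> = (\<Sum>r<Suc k. (- complex_of_real q) ^ r * w (del r m) * x [m ! r])"
    unfolding sum_distrib_left
  proof (rule sum.cong[OF refl])
    fix r assume "r \<in> {..<Suc k}"
    then have k: "k = r + (k - r)" by auto
    have "(- complex_of_real q) ^ (k - r) * (- 1 / complex_of_real q) ^ (k - r) = 1"
      using q by (simp add: power_mult_distrib[symmetric])
    then have "(- complex_of_real q) ^ k * (- 1 / complex_of_real q) ^ (k - r) = (- complex_of_real q) ^ r"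
      by (subst k) (simp add: power_add mult.assoc)
    then show "(- complex_of_real q) ^ k * ((- 1 / complex_of_real q) ^ (k - r) * w (del r m) * x [m ! r])
       = (- complex_of_real q) ^ r * w (del r m) * x [m ! r]" by (simp add: mult.assoc)
  qed
  finally show ?thesis using Suc by simp
qed




lemma iR_formula:
  fixes l :: nat and q :: real and x :: "nat list \<Rightarrow> complex"
    and iR :: "(nat list \<Rightarrow> complex) \<Rightarrow> nat list \<Rightarrow> complex"
  assumes q: "q \<noteq> 0"
    and iR_maps: "\<forall>v\<in>Vsp l. iR v \<in> Vsp l"
    and iR_adj: "\<forall>v\<in>Vsp l. \<forall>w\<in>Vsp l. ip l (iR v) w = ip l v (eR l q x w)"
    and v: "v \<in> Vsp l" and i: "i \<in> Lam l"
  shows "iR v i = (\<Sum>j\<in>{1..l} - set i.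
               (- complex_of_real q) ^ (pos j (insort j i) - 1) * cnj (x [j]) * v (insort j i))"
proof -
  define w where "w = (\<lambda>m. if m = i then (1::complex) else 0)"
  define T where "T = {1..l} - set i"
  define g where "g = (\<lambda>j. insort j i)"
  define F where "F = (\<lambda>m. cnj (v m) * eR l q x w m)"
  have si: "sorted_wrt (<) i" "set i \<subseteq> {1..l}" using i by (auto simp: Lam_def)
  have wV: "w \<in> Vsp l" using i by (auto simp: w_def Vsp_def)
  have "ip l (iR v) w = cnj (iR v i)"
    unfolding ip_def w_def using i finite_Lam[of l] by (simp add: if_distrib cong: if_cong)
  then have e1: "cnj (iR v i) = (\<Sum>m\<in>Lam l. F m)"
    using iR_adj v wV by (simp add: ip_def F_def)
  have gT: "g ` T \<subseteq> Lam l"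
    using insort_props[OF si(1)] si by (auto simp: g_def T_def Lam_def)
  have gset: "j \<in> T \<Longrightarrow> sorted_wrt (<) (g j) \<and> set (g j) = insert j (set i)" for j
    using insort_props[OF si(1), of j] by (auto simp: g_def T_def)
  have e2: "(\<Sum>m\<in>Lam l. F m) = (\<Sum>m\<in>g ` T. F m)"
  proof (rule sum.mono_neutral_right[OF finite_Lam gT], rule ballI)
    fix m assume m: "m \<in> Lam l - g ` T"
    have sm: "sorted_wrt (<) m" "set m \<subseteq> {1..l}" using m by (auto simp: Lam_def)
    have "eR l q x w m = (\<Sum>r<length m. (- complex_of_real q) ^ r * w (del r m) * x [m ! r])"
      using eR_eq[OF q] m by auto
    also have "\<dots> = 0"
    proof (rule sum.neutral, rule ballI)
      fix r assume r: "r \<in> {..<length m}"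
      have "del r m \<noteq> i"
      proof
        assume "del r m = i"
        then have h: "m ! r \<notin> set i \<and> m = insort (m ! r) i" using del_eq_iff[OF sm(1) si(1)] r by auto
        moreover have "m ! r \<in> {1..l}" using sm(2) r nth_mem[of r m] by blast
        ultimately have "m \<in> g ` T" by (auto simp: g_def T_def)
        then show False using m by auto
      qed
      then show "(- complex_of_real q) ^ r * w (del r m) * x [m ! r] = 0" by (simp add: w_def)
    qed
    finally show "F m = 0" by (simp add: F_def)
  qed
  have inj: "inj_on g T"
  proof (rule inj_onI)
    fix j j' assume "j \<in> T" "j' \<in> T" "g j = g j'"
    then have "insert j (set i) = insert j' (set i)" using gset by metis
    then show "j = j'" using \<open>j \<in> T\<close> \<open>j' \<in> T\<close> by (auto simp: T_def)
  qed
  have e3: "F (g j) = cnj (v (g j)) * ((- complex_of_real q) ^ (pos j (g j) - 1) * x [j])"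
    if j: "j \<in> T" for j
  proof -
    define m where "m = g j"
    have sm: "sorted_wrt (<) m" "set m = insert j (set i)" using gset[OF j] by (auto simp: m_def)
    have dm: "distinct m" using sm by (simp add: strict_sorted_iff)
    have jni: "j \<notin> set i" using j by (auto simp: T_def)
    have mL: "m \<in> Lam l" using gT j by (auto simp: m_def)
    define r0 where "r0 = pos j m - 1"
    have r0: "r0 < length m" "m ! r0 = j" using pos_nth[OF dm] sm by (auto simp: r0_def)
    have iff: "del r m = i \<longleftrightarrow> r = r0" if r: "r < length m" for r
    proof
      assume "del r m = i"
      then have h: "m ! r \<notin> set i \<and> m = insort (m ! r) i" using del_eq_iff[OF sm(1) si(1) r] by auto
      have "m ! r \<in> insert j (set i)" using sm(2) r nth_mem by metis
      then have "m ! r = j" using h by auto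
      then show "r = r0" using r0 r dm nth_eq_iff_index_eq by metis
    next
      assume "r = r0"
      then show "del r m = i" using del_eq_iff[OF sm(1) si(1) r] r0 jni by (simp add: m_def g_def)
    qed
    have "eR l q x w m = (\<Sum>r<length m. (- complex_of_real q) ^ r * w (del r m) * x [m ! r])"
      using eR_eq[OF q] mL by auto
    also have "\<dots> = (\<Sum>r<length m. if r = r0 then (- complex_of_real q) ^ r * x [m ! r] else 0)"
      by (rule sum.cong[OF refl]) (auto simp: w_def iff)
    also have "\<dots> = (- complex_of_real q) ^ r0 * x [j]"
      using r0 by (simp add: sum.delta)
    finally show ?thesis by (simp add: F_def m_def r0_def)
  qed
  have "cnj (iR v i) = (\<Sum>j\<in>T. cnj (v (g j)) * ((- complex_of_real q) ^ (pos j (g j) - 1) * x [j]))"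
    using e1 e2 sum.reindex[OF inj, of F] e3 by simp
  then have "iR v i = cnj (\<Sum>j\<in>T. cnj (v (g j)) * ((- complex_of_real q) ^ (pos j (g j) - 1) * x [j]))"
    by (metis complex_cnj_cnj)
  also have "\<dots> = (\<Sum>j\<in>T. (- complex_of_real q) ^ (pos j (g j) - 1) * cnj (x [j]) * v (g j))"
    by (simp add: cnj_sum mult.commute mult.left_commute)
  finally show ?thesis by (simp add: T_def g_def)
qed




lemma sum_list_insort_nat: "sum_list (insort (j::nat) i) = j + sum_list i"
  by (induct i) auto

theorem proposition3p11:
  fixes l :: nat and q :: real
    and x :: "nat list \<Rightarrow> complex"
    and iR :: "(nat list \<Rightarrow> complex) \<Rightarrow> nat list \<Rightarrow> complex"
  assumes "0 < q" and "q < 1" and "2 \<le> l"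
    and x: "x \<in> Wk l 1"
    and iR_maps: "\<forall>v\<in>Vsp l. iR v \<in> Vsp l"
    and iR_adj: "\<forall>v\<in>Vsp l. \<forall>w\<in>Vsp l. ip l (iR v) w = ip l v (eR l q x w)"
  shows "(\<forall>v\<in>Vsp l. Jop l q (eL l q x (inv_into (Vsp l) (Jop l q) v))
            = (\<lambda>i. - complex_of_real q * iR v i))
      \<and> (\<forall>k v i. v \<in> Wk l (Suc k) \<longrightarrow> i \<in> Lamk l k \<longrightarrow>
            iR v i = (\<Sum>j\<in>{1..l} - set i.
               (- complex_of_real q) ^ (pos j (insort j i) - 1) * cnj (x [j]) * v (insort j i)))"
proof
  have q0: "q \<noteq> 0" using assms(1) by simp
  note F = iR_formula[OF q0 iR_maps iR_adj]
  show "\<forall>k v i. v \<in> Wk l (Suc k) \<longrightarrow> i \<in> Lamk l k \<longrightarrow>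
            iR v i = (\<Sum>j\<in>{1..l} - set i.
               (- complex_of_real q) ^ (pos j (insort j i) - 1) * cnj (x [j]) * v (insort j i))"
  proof (intro allI impI)
    fix k v i assume "v \<in> Wk l (Suc k)" "i \<in> Lamk l k"
    then have "v \<in> Vsp l" "i \<in> Lam l" by (auto simp: Wk_def Lamk_def)
    then show "iR v i = (\<Sum>j\<in>{1..l} - set i.
               (- complex_of_real q) ^ (pos j (insort j i) - 1) * cnj (x [j]) * v (insort j i))"
      by (rule F)
  qed
  define a where "a = - 1 / complex_of_real q"
  define b where "b = - complex_of_real q"
  define c where "c = complex_of_real (q powr (real (l * (l + 1)) / 4))"
  have a0: "a \<noteq> 0" using q0 by (simp add: a_def)
  have c0: "c \<noteq> 0" using assms(1) by (simp add: c_def)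
  have ab: "a * b = 1" using q0 by (simp add: a_def b_def)
  have cnja: "cnj a = a" by (simp add: a_def)
  have cnjc: "cnj c = c" by (simp add: c_def)
  have Jat: "Jop l q w i = (if i \<in> Lam l then a ^ sum_list i * c * cnj (w (compl l i)) else 0)" for w i
    by (simp add: Jop_def a_def c_def)
  show "\<forall>v\<in>Vsp l. Jop l q (eL l q x (inv_into (Vsp l) (Jop l q) v))
            = (\<lambda>i. - complex_of_real q * iR v i)"
  proof
    fix v assume v: "v \<in> Vsp l"
    define u0 where "u0 = (\<lambda>n. if n \<in> Lam l then cnj (v (compl l n)) / (a ^ sum_list (compl l n) * c) else 0)"
    have "Jop l q u0 = v"
    proof
      fix i show "Jop l q u0 i = v i"
      proof (cases "i \<in> Lam l")
        case True
        then show ?thesis using a0 c0 compl_Lam[of l i] compl_compl[OF True]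
          by (simp add: Jat u0_def cnja cnjc)
      next
        case False then show ?thesis using v by (simp add: Jat Vsp_def)
      qed
    qed
    moreover have "u0 \<in> Vsp l" by (simp add: Vsp_def u0_def)
    ultimately have vim: "v \<in> Jop l q ` Vsp l" by blast
    define u where "u = inv_into (Vsp l) (Jop l q) v"
    have Ju: "Jop l q u = v" using vim by (simp add: u_def f_inv_into_f)
    show "Jop l q (eL l q x u) = (\<lambda>i. - complex_of_real q * iR v i)"
    proof
      fix i
      show "Jop l q (eL l q x u) i = - complex_of_real q * iR v i"
      proof (cases "i \<in> Lam l")
        case False
        have "iR v \<in> Vsp l" using iR_maps v by blast
        then have "iR v i = 0" using False by (simp add: Vsp_def)
        then show ?thesis using False by (simp add: Jat)
      next
        case i: True
        have si: "sorted_wrt (<) i" "set i \<subseteq> {1..l}" using i by (auto simp: Lam_def)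
        define m where "m = compl l i"
        have mL: "m \<in> Lam l" by (simp add: m_def compl_Lam)
        have sm: "sorted_wrt (<) m" "set m = {1..l} - set i"
          using compl_props[of l i] by (auto simp: m_def)
        have dm: "distinct m" using sm by (simp add: strict_sorted_iff)
        define G where "G = (\<lambda>j. - complex_of_real q * (b ^ (pos j (insort j i) - 1) * cnj (x [j]) * v (insort j i)))"
        have tm: "a ^ sum_list i * c * cnj (a ^ r * x [m ! r] * u (del r m)) = G (m ! r)"
          if r: "r < length m" for r
        proof -
          define j where "j = m ! r"
          have jm: "j \<in> set m" using r by (simp add: j_def)
          have jl: "j \<in> {1..l}" "j \<notin> set i" using jm sm by auto
          define n where "n = del r m"
          have nL: "n \<in> Lam l" using del_Lam[OF mL r] by (simp add: n_def)
          have gi: "sorted_wrt (<) (insort j i) \<and> set (insort j i) = insert j (set i)"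
            using insort_props[OF si(1) jl(2)] by auto
          have cn: "compl l n = insort j i"
          proof (rule strict_sorted_equal)
            show "sorted_wrt (<) (compl l n)" using compl_props by blast
            show "sorted_wrt (<) (insort j i)" using gi by blast
            have sn: "set n = set m - {j}" using set_del[OF dm r] by (simp add: n_def j_def)
            have sc: "set (compl l n) = {1..l} - set n" using compl_props by blast
            have sg: "set (insort j i) = insert j (set i)" using gi by blast
            show "set (compl l n) = set (insort j i)"
              unfolding sc sg sn sm(2) using si(2) jl(1) by auto
          qed
          have "v (insort j i) = Jop l q u (compl l n)" using Ju cn by simp
          also have "\<dots> = a ^ sum_list (compl l n) * c * cnj (u (compl l (compl l n)))"
            using compl_Lam[of l n] by (simp only: Jat if_True)
          also have "\<dots> = a ^ (j + sum_list i) * c * cnj (u n)"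
            by (simp only: compl_compl[OF nL]) (simp only: cn sum_list_insort_nat)
          finally have vg: "v (insort j i) = a ^ (j + sum_list i) * c * cnj (u n)" .
          define r0 where "r0 = pos j (insort j i) - 1"
          have dg: "distinct (insort j i)" using gi by (simp add: strict_sorted_iff)
          have r0: "r0 < length (insort j i)" "insort j i ! r0 = j"
            using pos_nth[OF dg] gi by (auto simp: r0_def)
          have c1: "card {a \<in> set (insort j i). a < j} = r0"
            using idx_card[of "insort j i" r0] gi r0 by simp
          have "{a \<in> set (insort j i). a < j} = {a \<in> set i. a < j}" using gi by auto
          then have c1': "card {a \<in> set i. a < j} = r0" using c1 by simp
          have c2: "card {a \<in> set m. a < j} = r" using idx_card[OF sm(1) r] by (simp add: j_def)
          have un: "{a \<in> set i. a < j} \<union> {a \<in> set m. a < j} = {1..<j}"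
            using sm(2) si(2) jl(1) by auto
          have "card ({a \<in> set i. a < j} \<union> {a \<in> set m. a < j}) = r0 + r"
          proof (subst card_Un_disjoint)
            show "{a \<in> set i. a < j} \<inter> {a \<in> set m. a < j} = {}" using sm(2) by blast
          qed (use c1' c2 in auto)
          then have "card {1..<j} = r0 + r" by (simp only: un)
          then have "j - 1 = r0 + r" by simp
          then have jr: "j = Suc (r0 + r)" using jl(1) by (simp add: atLeastAtMost_iff) arith
          have L: "a ^ sum_list i * c * cnj (a ^ r * x [m ! r] * u (del r m))
              = (a ^ sum_list i * a ^ r * c) * (cnj (x [j]) * cnj (u n))"
            by (simp add: j_def n_def cnja mult.assoc mult.left_commute)
          have G1: "G j = b ^ Suc r0 * (cnj (x [j]) * (a ^ (j + sum_list i) * c * cnj (u n)))"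
            unfolding G_def vg r0_def[symmetric] by (simp add: b_def mult.assoc)
          have aj: "a ^ (j + sum_list i) = a ^ sum_list i * a ^ r * a ^ Suc r0"
            unfolding jr by (simp add: power_add mult.commute mult.left_commute)
          have ba: "b ^ Suc r0 * a ^ Suc r0 = 1"
            using ab by (metis mult.commute power_mult_distrib power_one)
          have "G j = (b ^ Suc r0 * a ^ Suc r0) * ((a ^ sum_list i * a ^ r * c) * (cnj (x [j]) * cnj (u n)))"
            unfolding G1 aj by (simp only: ac_simps)
          also have "\<dots> = (a ^ sum_list i * a ^ r * c) * (cnj (x [j]) * cnj (u n))"
            by (simp only: ba mult_1)
          finally show ?thesis using L by (simp add: j_def)

        qed
        have "Jop l q (eL l q x u) i = a ^ sum_list i * c * cnj (eL l q x u m)"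
          using i by (simp add: Jat m_def)
        also have "\<dots> = (\<Sum>r<length m. a ^ sum_list i * c * cnj (a ^ r * x [m ! r] * u (del r m)))"
          using eL_eq[OF mL] by (simp add: a_def cnj_sum sum_distrib_left)
        also have "\<dots> = (\<Sum>r<length m. G (m ! r))"
          using tm by simp
        also have "\<dots> = sum_list (map G m)" by (simp add: sum_list_sum_nth atLeast0LessThan)
        also have "\<dots> = (\<Sum>j\<in>set m. G j)" using dm by (simp add: sum_list_distinct_conv_sum_set)
        also have "\<dots> = - complex_of_real q * iR v i"
          using F[OF v i] sm by (simp add: G_def b_def sum_distrib_left)
        finally show ?thesis .
      qed
    qed
  qed
qed


end
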